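(* Let $G$ be a locally compact group with right Haar measure $\vartheta$, let $1\le p<\infty$, let $g\in G$ be aperiodic, and let $w:G\to(0,+\infty)$ be a bounded function. Suppose the weighted translation operator $T_{g,w}:\mathfrak{L}^p(G)\to\mathfrak{L}^p(G)$, $T_{g,w}(f)(x)=w(x)f(xg^{-1})$, is convex-cyclic and that the point spectrum of its adjoint is empty, $\sigma_p(T_{g,w}^* )=\emptyset$. Then for each compact subset $K\subset G$ with $\vartheta(K)>0$ there exist $N_0\in\mathbb{N}$, a sequence of Borel subsets $(E_n)$ of $K$, and a sequence $(a_n)\subseteq[0,1]$ with $\sum_{i=0}^\infty a_i=1$ such that $$1\Big/\liminf_{n\to\infty}\Big\Vert\Big(a_0\prod_{i=0}^{N_0-1}w*\delta_{g^{i}}+a_1\prod_{i=0}^{N_0}w*\delta_{g^{i}}+\cdots+a_n\prod_{i=0}^{N_0+n-1}w*\delta_{g^{i}}\Big)\Big|_{E_n}\Big\Vert_\infty=0.$$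
   Context: For $h\in G$, $\delta_h$ is the unit point mass at $h$ and $(f*\delta_h)(x)=f(xh^{-1})$; thus $(w*\delta_{g^{i}})(x)=w(xg^{-i})$. Products are pointwise, $F|_{E}$ denotes restriction to $E$, and $\Vert\cdot\Vert_\infty$ is the (essential) supremum norm. An element $g\in G$ is aperiodic if the closed subgroup generated by $g$ is not compact. A bounded linear operator $T$ on a Banach space $X$ is convex-cyclic if there is $x\in X$ such that the convex hull of $\{T^nx:n\ge0\}$ is dense in $X$. $T^*$ denotes the Banach-space adjoint acting on the dual space, and $\sigma_p$ denotes the set of eigenvalues. *)

theory Defs
  imports "HOL-Analysis.Analysis" "HOL-Probability.Probability"
begin

text \<open>Groups are written additively (class group_add, not necessarily abelian):
  the product x h of the paper is x + h, the inverse h^{-1} is - h, and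
  x h^{-1} is x + - h.\<close>

definition gpow :: "'a::group_add \<Rightarrow> nat \<Rightarrow> 'a" where
  "gpow g n = ((\<lambda>x. x + g) ^^ n) 0"

definition gipow :: "'a::group_add \<Rightarrow> int \<Rightarrow> 'a" where
  "gipow g k = (if 0 \<le> k then gpow g (nat k) else - gpow g (nat (- k)))"

definition aperiodic :: "'a::topological_group_add \<Rightarrow> bool" where
  "aperiodic g \<longleftrightarrow> \<not> compact (closure (range (gipow g)))"

definition right_haar_measure :: "'a::topological_group_add measure \<Rightarrow> bool" where
  "right_haar_measure M \<longleftrightarrow>
     sets M = sets borel \<and>
     emeasure M (space M) \<noteq> 0 \<and>
     (\<forall>A\<in>sets M. \<forall>h. emeasure M ((\<lambda>x. x + h) ` A) = emeasure M A) \<and>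
     (\<forall>K. compact K \<longrightarrow> emeasure M K < \<infinity>) \<and>
     (\<forall>A\<in>sets M. emeasure M A = (INF U\<in>{U. open U \<and> A \<subseteq> U}. emeasure M U)) \<and>
     (\<forall>U. open U \<longrightarrow> emeasure M U = (SUP K\<in>{K. compact K \<and> K \<subseteq> U}. emeasure M K))"

definition Lp_mem :: "'a measure \<Rightarrow> real \<Rightarrow> ('a \<Rightarrow> complex) \<Rightarrow> bool" where
  "Lp_mem M p f \<longleftrightarrow> f \<in> borel_measurable M \<and> integrable M (\<lambda>x. norm (f x) powr p)"

definition Lp_norm :: "'a measure \<Rightarrow> real \<Rightarrow> ('a \<Rightarrow> complex) \<Rightarrow> real" where
  "Lp_norm M p f = (\<integral>x. norm (f x) powr p \<partial>M) powr (1 / p)"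

definition wtrans :: "'a::group_add \<Rightarrow> ('a \<Rightarrow> real) \<Rightarrow> ('a \<Rightarrow> complex) \<Rightarrow> ('a \<Rightarrow> complex)" where
  "wtrans g w f = (\<lambda>x. complex_of_real (w x) * f (x + - g))"

definition convex_cyclic_Lp ::
  "'a measure \<Rightarrow> real \<Rightarrow> (('a \<Rightarrow> complex) \<Rightarrow> ('a \<Rightarrow> complex)) \<Rightarrow> bool" where
  "convex_cyclic_Lp M p T \<longleftrightarrow>
     (\<exists>f. Lp_mem M p f \<and>
        (\<forall>h. Lp_mem M p h \<longrightarrow> (\<forall>\<epsilon>>0. \<exists>N::nat. \<exists>c::nat \<Rightarrow> real.
            (\<forall>n\<le>N. 0 \<le> c n) \<and> (\<Sum>n\<le>N. c n) = 1 \<and>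
            Lp_norm M p (\<lambda>x. (\<Sum>n\<le>N. complex_of_real (c n) * (T ^^ n) f x) - h x) < \<epsilon>)))"

definition Lp_dual :: "'a measure \<Rightarrow> real \<Rightarrow> (('a \<Rightarrow> complex) \<Rightarrow> complex) \<Rightarrow> bool" where
  "Lp_dual M p \<phi> \<longleftrightarrow>
     (\<forall>f h. Lp_mem M p f \<longrightarrow> Lp_mem M p h \<longrightarrow> \<phi> (\<lambda>x. f x + h x) = \<phi> f + \<phi> h) \<and>
     (\<forall>f a. Lp_mem M p f \<longrightarrow> \<phi> (\<lambda>x. a * f x) = a * \<phi> f) \<and>
     (\<exists>C. \<forall>f. Lp_mem M p f \<longrightarrow> norm (\<phi> f) \<le> C * Lp_norm M p f)"

text \<open>Point spectrum of the adjoint T^* on the dual of L^p(M):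
  \<lambda> is an eigenvalue iff there is a nonzero bounded functional \<phi>
  with T^* \<phi> = \<phi> \<circ> T = \<lambda> \<phi>.\<close>
definition adjoint_point_spectrum ::
  "'a measure \<Rightarrow> real \<Rightarrow> (('a \<Rightarrow> complex) \<Rightarrow> ('a \<Rightarrow> complex)) \<Rightarrow> complex set" where
  "adjoint_point_spectrum M p T =
     {c. \<exists>\<phi>. Lp_dual M p \<phi> \<and> (\<exists>f. Lp_mem M p f \<and> \<phi> f \<noteq> 0) \<and>
            (\<forall>f. Lp_mem M p f \<longrightarrow> \<phi> (T f) = c * \<phi> f)}"

end

theory Submission
  imports Defs
begin


definition WW :: "'a::group_add \<Rightarrow> ('a \<Rightarrow> real) \<Rightarrow> nat \<Rightarrow> 'a \<Rightarrow> real" where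
  "WW g w n x = (\<Prod>i<n. w (x + - gpow g i))"

lemma gpow_0[simp]: "gpow g 0 = 0" by (simp add: gpow_def)
lemma gpow_Suc: "gpow g (Suc n) = gpow g n + g" by (simp add: gpow_def)

lemma shift_Suc[simp]: "x - gpow g (Suc n) = x - g - gpow g n"
  by (simp only: gpow_Suc diff_conv_add_uminus minus_add add.assoc)

lemma WW_Suc: "WW g w (Suc n) x = w x * WW g w n (x + - g)"
  unfolding WW_def prod.lessThan_Suc_shift by (simp add: shift_Suc)

lemma wtrans_pow: "(wtrans g w ^^ n) f x = complex_of_real (WW g w n x) * f (x + - gpow g n)"
proof (induction n arbitrary: x)
  case 0 then show ?case by (simp add: WW_def)
next
  case (Suc n) then show ?case by (simp add: wtrans_def WW_Suc)
qed

lemma WW_nonneg: "(\<And>x. 0 \<le> w x) \<Longrightarrow> 0 \<le> WW g w n x"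
  unfolding WW_def by (intro prod_nonneg) auto

lemma WW_le: "(\<And>x. 0 \<le> w x) \<Longrightarrow> (\<And>x. w x \<le> B) \<Longrightarrow> WW g w n x \<le> B ^ n"
  unfolding WW_def using prod_mono[of "{..<n}" "\<lambda>i. w (x + - gpow g i)" "\<lambda>_. B"] by simp

lemma powr_convex0:
  assumes "p \<ge> 1" shows "convex_on {0..} (\<lambda>x::real. x powr p)"
proof (rule convex_onI)
  show "convex {0::real..}" by simp
  fix t x y :: real assume t: "0 < t" "t < 1" and x: "x \<in> {0..}" and y: "y \<in> {0..}"
  show "((1 - t) *\<^sub>R x + t *\<^sub>R y) powr p \<le> (1 - t) * x powr p + t * y powr p"
  proof (cases "x = 0 \<or> y = 0")
    case True
    have a: "s * z powr p \<le> s * z powr p" for s z :: real by simp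
    have b: "(s * z) powr p \<le> s * z powr p" if "0 \<le> s" "s \<le> 1" "0 \<le> z" for s z :: real
    proof -
      have "(s * z) powr p = s powr p * z powr p" using that by (simp add: powr_mult)
      also have "s powr p \<le> s powr 1" using that assms
        by (intro powr_mono') auto
      then have "s powr p * z powr p \<le> s * z powr p" using that by (auto intro: mult_right_mono)
      finally show ?thesis .
    qed
    show ?thesis using True t x y b[of "1-t" x] b[of t y] by auto
  next
    case False
    then have "x \<in> {0<..}" "y \<in> {0<..}" using x y by auto
    then show ?thesis using powr_convex[OF assms] t unfolding convex_on_def by auto
  qed
qed

lemma jensen_powr:
  fixes c y :: "nat \<Rightarrow> real"
  assumes "p \<ge> 1" "(\<Sum>n\<le>N. c n) = 1" "\<And>n. n \<le> N \<Longrightarrow> 0 \<le> c n" "\<And>n. n \<le> N \<Longrightarrow> 0 \<le> y n"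
  shows "(\<Sum>n\<le>N. c n * y n) powr p \<le> (\<Sum>n\<le>N. c n * y n powr p)"
  using convex_on_sum[OF _ _ powr_convex0[OF assms(1)], of "{..N}" c y] assms by auto



lemma haar_sets: "right_haar_measure M \<Longrightarrow> sets M = sets borel"
  by (simp add: right_haar_measure_def)

lemma haar_space: "right_haar_measure M \<Longrightarrow> space M = UNIV"
proof -
  assume "right_haar_measure M"
  then have "space M = space borel" by (intro sets_eq_imp_space_eq haar_sets)
  then show ?thesis by simp
qed

lemma trans_meas_borel: "(\<lambda>x::'a::topological_group_add. x + a) \<in> borel_measurable borel"
  by (intro borel_measurable_continuous_onI continuous_intros)

lemma trans_meas:
  assumes "right_haar_measure M"
  shows "(\<lambda>x::'a::topological_group_add. x + a) \<in> measurable M M"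
  using trans_meas_borel[of a] measurable_cong_sets[OF haar_sets[OF assms] haar_sets[OF assms]] by (simp only:)

lemma haar_inv:
  assumes "right_haar_measure M" "A \<in> sets M"
  shows "emeasure M ((\<lambda>x. x + b) ` A) = emeasure M A"
proof -
  have "\<forall>A\<in>sets M. \<forall>h. emeasure M ((\<lambda>x. x + h) ` A) = emeasure M A"
    using assms(1) unfolding right_haar_measure_def by (elim conjE)
  then show ?thesis using assms(2) by simp
qed

lemma haar_distr:
  assumes h: "right_haar_measure M"
  shows "distr M M (\<lambda>x::'a::topological_group_add. x + a) = M"
proof (rule measure_eqI)
  show "sets (distr M M (\<lambda>x. x + a)) = sets M" by simp
  fix A assume A: "A \<in> sets (distr M M (\<lambda>x. x + a))"
  then have A': "A \<in> sets M" by simp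
  have "(\<lambda>x. x + a) -` A \<inter> space M = (\<lambda>y. y + - a) ` A"
  proof (intro set_eqI iffI)
    fix x assume "x \<in> (\<lambda>x. x + a) -` A \<inter> space M"
    then have "x + a \<in> A" by simp
    moreover have "x = (x + a) + - a" by (simp add: add.assoc)
    ultimately show "x \<in> (\<lambda>y. y + - a) ` A" by (rule rev_image_eqI)
  next
    fix x assume "x \<in> (\<lambda>y. y + - a) ` A"
    then obtain y where "y \<in> A" "x = y + - a" by blast
    then have "x + a \<in> A" by (simp add: add.assoc)
    then show "x \<in> (\<lambda>x. x + a) -` A \<inter> space M" by (simp add: haar_space[OF h])
  qed
  moreover have "emeasure M ((\<lambda>y. y + - a) ` A) = emeasure M A"
    using haar_inv[OF h A'] .
  ultimately show "emeasure (distr M M (\<lambda>x. x + a)) A = emeasure M A"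
    using A' by (simp add: emeasure_distr trans_meas[OF h])
qed

lemma haar_integrable:
  fixes \<phi> :: "'a::topological_group_add \<Rightarrow> real"
  assumes h: "right_haar_measure M" and m: "\<phi> \<in> borel_measurable M"
  shows "integrable M (\<lambda>x. \<phi> (x + a)) \<longleftrightarrow> integrable M \<phi>"
  using integrable_distr_eq[OF trans_meas[OF h] m] haar_distr[OF h] by simp

lemma haar_integral:
  fixes \<phi> :: "'a::topological_group_add \<Rightarrow> real"
  assumes h: "right_haar_measure M" and m: "\<phi> \<in> borel_measurable M"
  shows "(\<integral>x. \<phi> (x + a) \<partial>M) = (\<integral>x. \<phi> x \<partial>M)"
  using integral_distr[OF trans_meas[OF h] m] haar_distr[OF h] by simp



lemma pt_bound:
  fixes c a b :: "nat \<Rightarrow> real" and z :: "nat \<Rightarrow> complex"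
  assumes p: "p \<ge> 1" and c1: "(\<Sum>n\<le>N. c n) = 1" and c0: "\<And>n. n \<le> N \<Longrightarrow> 0 \<le> c n"
    and ab: "\<And>n. n \<le> N \<Longrightarrow> 0 \<le> a n \<and> a n \<le> b n"
  shows "norm (\<Sum>n\<le>N. complex_of_real (c n) * (complex_of_real (a n) * z n)) powr p
          \<le> (\<Sum>n\<le>N. c n * (b n powr p * norm (z n) powr p))"
proof -
  have "norm (\<Sum>n\<le>N. complex_of_real (c n) * (complex_of_real (a n) * z n))
        \<le> (\<Sum>n\<le>N. norm (complex_of_real (c n) * (complex_of_real (a n) * z n)))"
    by (rule norm_sum)
  also have "\<dots> \<le> (\<Sum>n\<le>N. c n * (b n * norm (z n)))"
  proof (rule sum_mono)
    fix n assume "n \<in> {..N}"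
    then have "0 \<le> c n" "0 \<le> a n" "a n \<le> b n" using c0 ab by auto
    then show "norm (complex_of_real (c n) * (complex_of_real (a n) * z n)) \<le> c n * (b n * norm (z n))"
      by (simp add: norm_mult mult_left_mono mult_right_mono)
  qed
  finally have 1: "norm (\<Sum>n\<le>N. complex_of_real (c n) * (complex_of_real (a n) * z n))
        \<le> (\<Sum>n\<le>N. c n * (b n * norm (z n)))" .
  have "norm (\<Sum>n\<le>N. complex_of_real (c n) * (complex_of_real (a n) * z n)) powr p
        \<le> (\<Sum>n\<le>N. c n * (b n * norm (z n))) powr p"
    using 1 p by (intro powr_mono2) auto
  also have "\<dots> \<le> (\<Sum>n\<le>N. c n * (b n * norm (z n)) powr p)"
  proof (rule jensen_powr[OF p c1 c0])
    fix n assume "n \<le> N"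
    then have "0 \<le> b n" using ab[of n] by linarith
    then show "0 \<le> b n * norm (z n)" by simp
  qed
  also have "\<dots> = (\<Sum>n\<le>N. c n * (b n powr p * norm (z n) powr p))"
  proof (rule sum.cong)
    fix n assume "n \<in> {..N}"
    then have "0 \<le> b n" using ab by force
    then show "c n * (b n * norm (z n)) powr p = c n * (b n powr p * norm (z n) powr p)"
      by (simp add: powr_mult)
  qed simp
  finally show ?thesis .
qed



lemma wM_lemma: fixes w :: "'a::topological_group_add \<Rightarrow> 'b::topological_space" shows "right_haar_measure M \<Longrightarrow> w \<in> borel_measurable borel \<Longrightarrow> w \<in> borel_measurable M"
proof -
  assume h: "right_haar_measure M" and w: "w \<in> borel_measurable borel"
  have "(borel_measurable M :: ('a \<Rightarrow> 'b) set) = borel_measurable borel"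
    by (rule measurable_cong_sets[OF haar_sets[OF h] refl])
  then show ?thesis using w by (simp only:)
qed

lemma shift_meas:
  assumes "right_haar_measure M" "\<phi> \<in> borel_measurable M"
  shows "(\<lambda>x. \<phi> (x + a)) \<in> borel_measurable M"
  using measurable_compose[OF trans_meas[OF assms(1)] assms(2)] by simp

lemma WW_meas:
  assumes "right_haar_measure M" "w \<in> borel_measurable M"
  shows "WW g w n \<in> borel_measurable M"
  unfolding WW_def by (intro borel_measurable_prod shift_meas[OF assms])

lemma norm_diff_powr:
  fixes u v :: complex assumes p: "p \<ge> 1"
  shows "norm (u - v) powr p \<le> 2 powr p * (norm u powr p + norm v powr p)"
proof -
  have "norm (u - v) \<le> 2 * max (norm u) (norm v)"
    using norm_triangle_ineq4[of u v] by linarith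
  then have "norm (u - v) powr p \<le> (2 * max (norm u) (norm v)) powr p"
    using p by (intro powr_mono2) auto
  also have "\<dots> = 2 powr p * max (norm u) (norm v) powr p"
    by (simp add: powr_mult)
  also have "max (norm u) (norm v) powr p \<le> norm u powr p + norm v powr p"
    by (cases "norm u \<le> norm v") (auto simp: max_def)
  then have "2 powr p * max (norm u) (norm v) powr p \<le> 2 powr p * (norm u powr p + norm v powr p)"
    by (intro mult_left_mono) auto
  finally show ?thesis .
qed



lemma main_contra:
  fixes M :: "'a::topological_group_add measure" and w :: "'a \<Rightarrow> real"
  assumes h: "right_haar_measure M" and p: "1 \<le> p"
    and wpos: "\<forall>x. 0 < w x" and wB: "\<forall>x. w x \<le> B" and wm: "w \<in> borel_measurable borel"
    and cc: "convex_cyclic_Lp M p (wtrans g w)"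
    and KM: "K \<in> sets M" and Kfin: "emeasure M K < \<infinity>" and Kpos: "0 < emeasure M K"
    and bnd: "\<forall>n. AE x in M. x \<in> K \<longrightarrow> WW g w n x \<le> C"
  shows False
proof -
  define C' where "C' = max C 0"
  have C'0: "0 \<le> C'" by (simp add: C'_def)
  have bnd': "AE x in M. x \<in> K \<longrightarrow> WW g w n x \<le> C'" for n
    using bnd[rule_format, of n] by (rule eventually_mono) (auto simp: C'_def)
  have wM: "w \<in> borel_measurable M" using wM_lemma[OF h wm] .
  have w0: "0 \<le> w x" for x using wpos by (simp add: less_imp_le)
  have B0: "0 \<le> B" using w0[of 0] wB by (meson order_trans)
  obtain f where fL: "Lp_mem M p f" and app: "\<And>hh. Lp_mem M p hh \<Longrightarrow> (\<forall>\<epsilon>>0. \<exists>N::nat. \<exists>c::nat \<Rightarrow> real.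
            (\<forall>n\<le>N. 0 \<le> c n) \<and> (\<Sum>n\<le>N. c n) = 1 \<and>
            Lp_norm M p (\<lambda>x. (\<Sum>n\<le>N. complex_of_real (c n) * (wtrans g w ^^ n) f x) - hh x) < \<epsilon>)"
    using cc unfolding convex_cyclic_Lp_def by blast
  have fm: "f \<in> borel_measurable M" and fi: "integrable M (\<lambda>x. norm (f x) powr p)"
    using fL by (auto simp: Lp_mem_def)
  define fn where "fn n x = f (x + - gpow g n)" for n x
  have fnm: "fn n \<in> borel_measurable M" for n
    unfolding fn_def by (rule shift_meas[OF h fm])
  have pm: "(\<lambda>x. norm (f x) powr p) \<in> borel_measurable M" using fm by measurable
  have fni: "integrable M (\<lambda>x. norm (fn n x) powr p)" for n
    unfolding fn_def using haar_integrable[OF h pm, of "- gpow g n"] fi by simp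
  define If where "If = (\<integral>x. norm (f x) powr p \<partial>M)"
  have fnI: "(\<integral>x. norm (fn n x) powr p \<partial>M) = If" for n
    unfolding fn_def If_def using haar_integral[OF h pm, of "- gpow g n"] by simp
  have If0: "0 \<le> If" unfolding If_def by (intro integral_nonneg_AE) auto
  define \<mu>K where "\<mu>K = measure M K"
  have \<mu>K0: "0 < \<mu>K" unfolding \<mu>K_def measure_def using Kfin Kpos by (simp add: enn2real_positive_iff)
  define D where "D = 1 + C' powr p * If"
  have D0: "0 < D" unfolding D_def using If0 by (simp add: add_pos_nonneg)
  define r where "r = (D / \<mu>K) powr (1 / p)"
  have r0: "0 < r" unfolding r_def using D0 \<mu>K0 by simp
  have rp: "r powr p = D / \<mu>K" unfolding r_def using D0 \<mu>K0 p by (simp add: powr_powr)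
  define hh :: "'a \<Rightarrow> complex" where "hh x = complex_of_real (2 * r) * indicator K x" for x
  have hhm: "hh \<in> borel_measurable M" unfolding hh_def using KM by measurable
  have hhp: "norm (hh x) powr p = (2 * r) powr p * indicator K x" for x
    using r0 p by (cases "x \<in> K") (auto simp: hh_def)
  have hhi: "integrable M (\<lambda>x. norm (hh x) powr p)"
    unfolding hhp using KM Kfin by (intro integrable_mult_right integrable_real_indicator) auto
  have hL: "Lp_mem M p hh" unfolding Lp_mem_def using hhm hhi by simp
  obtain N and c :: "nat \<Rightarrow> real" where c0: "\<forall>n\<le>N. 0 \<le> c n" and c1: "(\<Sum>n\<le>N. c n) = 1"
    and lt: "Lp_norm M p (\<lambda>x. (\<Sum>n\<le>N. complex_of_real (c n) * (wtrans g w ^^ n) f x) - hh x) < 1"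
    using app[OF hL] by (meson zero_less_one)
  define SS where "SS x = (\<Sum>n\<le>N. complex_of_real (c n) * (complex_of_real (WW g w n x) * fn n x))" for x
  have SSeq: "(\<Sum>n\<le>N. complex_of_real (c n) * (wtrans g w ^^ n) f x) = SS x" for x
    unfolding SS_def fn_def by (simp only: wtrans_pow)
  have WWm: "WW g w n \<in> borel_measurable M" for n using WW_meas[OF h wM] .
  have WWn: "0 \<le> WW g w n x" for n x using WW_nonneg[of w g n x] w0 by blast
  have WWB: "WW g w n x \<le> B ^ n" for n x using WW_le[of w B g n x] w0 wB by blast
  have SSm: "SS \<in> borel_measurable M" unfolding SS_def using WWm fnm by measurable
  have Dm: "(\<lambda>x. norm (SS x - hh x) powr p) \<in> borel_measurable M" using SSm hhm by measurable
  have bound1: "norm (SS x) powr p \<le> (\<Sum>n\<le>N. c n * ((B ^ n) powr p * norm (fn n x) powr p))" for x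
    unfolding SS_def
    by (rule pt_bound[OF p c1]) (use c0 WWn WWB in auto)
  define F where "F x = 2 powr p * ((\<Sum>n\<le>N. c n * ((B ^ n) powr p * norm (fn n x) powr p)) + (2 * r) powr p * indicator K x)" for x
  have Fi: "integrable M F" unfolding F_def using fni hhi hhp
    by (intro integrable_mult_right integrable_add integrable_sum) auto
  have Di: "integrable M (\<lambda>x. norm (SS x - hh x) powr p)"
  proof (rule Bochner_Integration.integrable_bound[OF Fi Dm], rule AE_I2)
    fix x
    have "norm (SS x - hh x) powr p \<le> 2 powr p * (norm (SS x) powr p + norm (hh x) powr p)"
      by (rule norm_diff_powr[OF p])
    also have "\<dots> \<le> F x" unfolding F_def hhp[symmetric] using bound1[of x]
      by (intro mult_left_mono add_right_mono) auto
    finally show "norm (norm (SS x - hh x) powr p) \<le> norm (F x)" by simp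
  qed
  have DI: "(\<integral>x. norm (SS x - hh x) powr p \<partial>M) < 1"
  proof (rule ccontr)
    assume "\<not> ?thesis"
    then have "1 \<le> (\<integral>x. norm (SS x - hh x) powr p \<partial>M) powr (1 / p)"
      using p by (intro ge_one_powr_ge_zero) auto
    then show False using lt unfolding Lp_norm_def SSeq by simp
  qed
  define G where "G x = norm (SS x - hh x) powr p + (\<Sum>n\<le>N. c n * (C' powr p * norm (fn n x) powr p))" for x
  have Gi: "integrable M G" unfolding G_def
    by (intro Bochner_Integration.integrable_add Di Bochner_Integration.integrable_sum
        Bochner_Integration.integrable_mult_right fni)
  have key: "AE x in M. r powr p * indicator K x \<le> G x"
  proof -
    have "AE x in M. \<forall>n\<in>{..N}. x \<in> K \<longrightarrow> WW g w n x \<le> C'"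
      by (rule AE_finite_allI) (use bnd' in auto)
    then show ?thesis
    proof (rule eventually_mono)
      fix x assume bx: "\<forall>n\<in>{..N}. x \<in> K \<longrightarrow> WW g w n x \<le> C'"
      have s0: "0 \<le> (\<Sum>n\<le>N. c n * (C' powr p * norm (fn n x) powr p))"
        using c0 by (intro sum_nonneg) auto
      show "r powr p * indicator K x \<le> G x"
      proof (cases "x \<in> K")
        case False then show ?thesis using s0 by (simp add: G_def)
      next
        case True
        then have hx: "hh x = complex_of_real (2 * r)" by (simp add: hh_def)
        show ?thesis
        proof (cases "norm (SS x) \<le> r")
          case True
          have "r \<le> norm (complex_of_real (2 * r)) - norm (SS x)" using True r0 by simp
          also have "\<dots> \<le> norm (SS x - hh x)" unfolding hx
            using norm_triangle_ineq3[of "complex_of_real (2 * r)" "SS x"] by (simp add: norm_minus_commute)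
          finally have "r powr p \<le> norm (SS x - hh x) powr p" using r0 p by (intro powr_mono2) auto
          then show ?thesis using s0 \<open>x \<in> K\<close> by (simp add: G_def)
        next
          case False
          then have "r powr p \<le> norm (SS x) powr p" using r0 p by (intro powr_mono2) auto
          also have "\<dots> \<le> (\<Sum>n\<le>N. c n * (C' powr p * norm (fn n x) powr p))"
            unfolding SS_def
            by (rule pt_bound[OF p c1]) (use c0 WWn bx \<open>x \<in> K\<close> in auto)
          finally show ?thesis using \<open>x \<in> K\<close> by (simp add: G_def add_increasing)
        qed
      qed
    qed
  qed
  have "(\<integral>x. r powr p * indicator K x \<partial>M) \<le> (\<integral>x. G x \<partial>M)"
    using KM Kfin by (intro integral_mono_AE[OF _ Gi key]) auto
  also have "(\<integral>x. G x \<partial>M) = (\<integral>x. norm (SS x - hh x) powr p \<partial>M) + (\<Sum>n\<le>N. c n * (C' powr p * If))"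
    unfolding G_def using Di fni fnI
    by (simp add: Bochner_Integration.integral_add Bochner_Integration.integral_sum integrable_sum)
  also have "(\<Sum>n\<le>N. c n * (C' powr p * If)) = C' powr p * If"
    using c1 by (simp add: sum_distrib_right[symmetric])
  finally have "r powr p * \<mu>K \<le> (\<integral>x. norm (SS x - hh x) powr p \<partial>M) + C' powr p * If"
    using KM by (simp add: \<mu>K_def)
  also have "\<dots> < D" using DI by (simp add: D_def)
  finally show False using rp \<mu>K0 by simp
qed



lemma esssup_ge:
  fixes \<phi> :: "'a \<Rightarrow> real"
  assumes K: "K \<in> sets M" and nae: "\<not> (AE x in M. x \<in> K \<longrightarrow> \<phi> x \<le> z)"
  shows "ereal z \<le> esssup (restrict_space M K) (\<lambda>x. ereal (\<phi> x))"
proof (rule ccontr)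
  assume "\<not> ?thesis"
  then have lt: "esssup (restrict_space M K) (\<lambda>x. ereal (\<phi> x)) < ereal z" by (simp only: not_le)
  have "AE x in restrict_space M K. ereal (\<phi> x) \<le> esssup (restrict_space M K) (\<lambda>x. ereal (\<phi> x))"
    by (rule esssup_AE)
  then have "AE x in restrict_space M K. \<phi> x \<le> z"
  proof (rule eventually_mono)
    fix x assume asm: "ereal (\<phi> x) \<le> esssup (restrict_space M K) (\<lambda>x. ereal (\<phi> x))"
    have "ereal (\<phi> x) < ereal z" by (rule le_less_trans[OF asm lt])
    then show "\<phi> x \<le> z" by simp
  qed
  moreover have KS: "K \<inter> space M \<in> sets M" using K by (simp add: sets.Int_space_eq2)
  ultimately have "AE x in M. x \<in> K \<longrightarrow> \<phi> x \<le> z" by (simp only: AE_restrict_space_iff[OF KS])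
  with nae show False by simp
qed

lemma final_part:
  fixes M :: "'a::topological_group_add measure" and w :: "'a \<Rightarrow> real"
  assumes KM: "K \<in> sets borel" and sM: "sets M = sets borel"
    and w0: "\<And>x. 0 \<le> w x" and wB: "\<And>x. w x \<le> B"
    and unb: "\<And>C. \<exists>n. \<not> (AE x in M. x \<in> K \<longrightarrow> WW g w n x \<le> C)"
  shows "\<exists>N0::nat. \<exists>E :: nat \<Rightarrow> 'a set. \<exists>a :: nat \<Rightarrow> real.
           (\<forall>n. E n \<in> sets borel \<and> E n \<subseteq> K) \<and>
           (\<forall>n. a n \<in> {0..1}) \<and> a sums 1 \<and>
           liminf (\<lambda>n. esssup (restrict_space M (E n))
              (\<lambda>x. ereal (\<Sum>k\<le>n. a k * (\<Prod>i<N0 + k. w (x + - gpow g i))))) = \<infinity>"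
proof -
  define B1 where "B1 = max B 1"
  have WWle: "WW g w n x \<le> B1 ^ m" if "n \<le> m" for n m x
  proof -
    have "WW g w n x \<le> B ^ n" using WW_le[of w B g n x] w0 wB by blast
    also have "\<dots> \<le> B1 ^ n" using w0[of x] wB[of x] by (intro power_mono) (auto simp: B1_def)
    also have "\<dots> \<le> B1 ^ m" using that by (intro power_increasing) (auto simp: B1_def)
    finally show ?thesis .
  qed
  have big: "\<exists>n. m0 < n \<and> \<not> (AE x in M. x \<in> K \<longrightarrow> WW g w n x \<le> C)" for m0 C
  proof -
    obtain n where n: "\<not> (AE x in M. x \<in> K \<longrightarrow> WW g w n x \<le> max C (B1 ^ m0))"
      using unb by blast
    have "m0 < n"
    proof (rule ccontr)
      assume "\<not> m0 < n"
      then have "WW g w n x \<le> max C (B1 ^ m0)" for x using WWle[of n m0 x] by simp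
      with n show False by simp
    qed
    moreover have "\<not> (AE x in M. x \<in> K \<longrightarrow> WW g w n x \<le> C)"
    proof
      assume "AE x in M. x \<in> K \<longrightarrow> WW g w n x \<le> C"
      then have "AE x in M. x \<in> K \<longrightarrow> WW g w n x \<le> max C (B1 ^ m0)"
        by (rule eventually_mono) auto
      with n show False by blast
    qed
    ultimately show ?thesis by blast
  qed
  define P where "P j m \<longleftrightarrow> \<not> (AE x in M. x \<in> K \<longrightarrow> WW g w m x \<le> 4 ^ Suc j)" for j m
  have "\<exists>mm. \<forall>j. P j (mm j) \<and> mm j < mm (Suc j)"
  proof (rule dependent_nat_choice)
    show "\<exists>x. P 0 x" unfolding P_def using unb by blast
    fix x n assume "P n x"
    show "\<exists>y. P (Suc n) y \<and> x < y" unfolding P_def using big[of x] by blast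
  qed
  then obtain mm where Pm: "\<And>j. P j (mm j)" and smm: "strict_mono mm"
    by (auto simp: strict_mono_Suc_iff)
  have injm: "inj mm" using smm by (rule strict_mono_imp_inj_on)
  define a where "a k = (if k \<in> range mm then (1/2::real) ^ Suc (inv mm k) else 0)" for k
  have am: "a (mm j) = (1/2) ^ Suc j" for j unfolding a_def using injm by simp
  have a0: "0 \<le> a k" for k unfolding a_def by simp
  have a1: "a k \<le> 1" for k
  proof -
    have "(1/2::real) ^ Suc n \<le> 1" for n by (rule power_le_one) auto
    then show ?thesis unfolding a_def by (simp only: split: if_split) simp
  qed
  have asums: "a sums 1"
  proof -
    have "(\<lambda>j. a (mm j)) sums 1" unfolding am by (rule power_half_series)
    then show ?thesis using sums_mono_reindex[OF smm, of a] by (simp add: a_def)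
  qed
  define F where "F n x = (\<Sum>k\<le>n. a k * (\<Prod>i<0 + k. w (x + - gpow g i)))" for n x
  have Feq: "F n x = (\<Sum>k\<le>n. a k * WW g w k x)" for n x unfolding F_def WW_def by simp
  have KM': "K \<in> sets M" using KM sM by simp
  have lower: "ereal (2 ^ Suc j) \<le> esssup (restrict_space M K) (\<lambda>x. ereal (F n x))"
    if "mm j \<le> n" for j n
  proof (rule esssup_ge[OF KM'])
    show "\<not> (AE x in M. x \<in> K \<longrightarrow> F n x \<le> 2 ^ Suc j)"
    proof
      assume ae: "AE x in M. x \<in> K \<longrightarrow> F n x \<le> 2 ^ Suc j"
      have "AE x in M. x \<in> K \<longrightarrow> WW g w (mm j) x \<le> 4 ^ Suc j"
      proof (rule eventually_mono[OF ae], intro impI)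
        fix x assume "x \<in> K \<longrightarrow> F n x \<le> 2 ^ Suc j" "x \<in> K"
        then have Fx: "F n x \<le> 2 ^ Suc j" by simp
        have "a (mm j) * WW g w (mm j) x \<le> (\<Sum>k\<le>n. a k * WW g w k x)"
          using that a0 WW_nonneg[of w] w0
          by (intro member_le_sum[of "mm j" "{..n}" "\<lambda>k. a k * WW g w k x"]) auto
        then have "(1/2) ^ Suc j * WW g w (mm j) x \<le> 2 ^ Suc j" using Fx Feq am by simp
        then have ineq: "2 ^ Suc j * ((1/2) ^ Suc j * WW g w (mm j) x) \<le> 2 ^ Suc j * 2 ^ Suc j"
          by (intro mult_left_mono) auto
        have "WW g w (mm j) x = (2::real) ^ Suc j * ((1/2) ^ Suc j * WW g w (mm j) x)"
          by (simp add: mult.assoc[symmetric] power_mult_distrib[symmetric])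
        also note ineq
        also have "(2::real) ^ Suc j * 2 ^ Suc j = 4 ^ Suc j"
          by (simp add: power_mult_distrib[symmetric])
        finally show "WW g w (mm j) x \<le> 4 ^ Suc j" .
      qed
      with Pm[of j] show False by (simp add: P_def)
    qed
  qed
  have "((\<lambda>n. esssup (restrict_space M K) (\<lambda>x. ereal (F n x))) \<longlongrightarrow> \<infinity>) sequentially"
    unfolding tendsto_PInfty
  proof
    fix r :: real
    obtain j :: nat where j: "r < j" using reals_Archimedean2 by blast
    have "j < (2::nat) ^ Suc j" using less_exp[of "Suc j"] by linarith
    then have "real j < real ((2::nat) ^ Suc j)" by (simp only: of_nat_less_iff)
    then have "real j < 2 ^ Suc j" by simp
    with j have rj: "ereal r < ereal (2 ^ Suc j)" by simp
    show "eventually (\<lambda>n. ereal r < esssup (restrict_space M K) (\<lambda>x. ereal (F n x))) sequentially"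
      using eventually_ge_at_top[of "mm j"]
    proof (rule eventually_mono)
      fix n assume "mm j \<le> n"
      from rj lower[OF this] show "ereal r < esssup (restrict_space M K) (\<lambda>x. ereal (F n x))"
        by (rule less_le_trans)
    qed
  qed
  then have "liminf (\<lambda>n. esssup (restrict_space M K) (\<lambda>x. ereal (F n x))) = \<infinity>"
    by (simp add: Liminf_PInfty)
  then show ?thesis
    using KM a0 a1 asums unfolding F_def
    by (intro exI[of _ 0] exI[of _ "\<lambda>_. K"] exI[of _ a]) auto
qed



theorem theorem2p3:
  fixes M :: "'a::{topological_group_add, t2_space} measure"
    and p :: real and g :: 'a and w :: "'a \<Rightarrow> real"
  assumes lc: "locally_compact_space (euclidean :: 'a topology)"
    and haar: "right_haar_measure M"
    and p: "1 \<le> p"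
    and aper: "aperiodic g"
    and wpos: "\<forall>x. 0 < w x"
    and wbdd: "bounded (range w)"
    and wmeas: "w \<in> borel_measurable borel"
    and cc: "convex_cyclic_Lp M p (wtrans g w)"
    and sp: "adjoint_point_spectrum M p (wtrans g w) = {}"
    and K: "compact K" "emeasure M K > 0"
  shows "\<exists>N0::nat. \<exists>E :: nat \<Rightarrow> 'a set. \<exists>a :: nat \<Rightarrow> real.
           (\<forall>n. E n \<in> sets borel \<and> E n \<subseteq> K) \<and>
           (\<forall>n. a n \<in> {0..1}) \<and> a sums 1 \<and>
           liminf (\<lambda>n. esssup (restrict_space M (E n))
              (\<lambda>x. ereal (\<Sum>k\<le>n. a k * (\<Prod>i<N0 + k. w (x + - gpow g i))))) = \<infinity>"
proof -
  obtain B where B: "\<forall>y\<in>range w. norm y \<le> B" using wbdd unfolding bounded_iff by blast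
  have wB: "\<forall>x. w x \<le> B"
  proof
    fix x have "norm (w x) \<le> B" using B by blast
    then show "w x \<le> B" by (simp add: abs_le_iff)
  qed
  have w0: "\<And>x. 0 \<le> w x" using wpos by (simp add: less_imp_le)
  have sM: "sets M = sets borel" by (rule haar_sets[OF haar])
  have KB: "K \<in> sets borel" using K(1) by (intro borel_closed compact_imp_closed)
  have KM: "K \<in> sets M" using KB sM by simp
  have "\<forall>K. compact K \<longrightarrow> emeasure M K < \<infinity>"
    using haar unfolding right_haar_measure_def by (elim conjE)
  then have Kfin: "emeasure M K < \<infinity>" using K(1) by simp
  have unb: "\<exists>n. \<not> (AE x in M. x \<in> K \<longrightarrow> WW g w n x \<le> C)" for C
  proof (rule ccontr)
    assume "\<not> ?thesis"
    then have "\<forall>n. AE x in M. x \<in> K \<longrightarrow> WW g w n x \<le> C" by blast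
    then show False
      by (rule main_contra[OF haar p wpos wB wmeas cc KM Kfin K(2)])
  qed
  show ?thesis
    by (rule final_part[OF KB sM w0 _ unb]) (use wB in blast)
qed


end
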